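(* Let $p$ be a prime and $G$ a totally disconnected locally compact group. The following are equivalent: 1. $G$ is locally elliptic. 2. $G$ satisfies Reiter's property for $\varepsilon = 0$. 3. $G$ satisfies Reiter's property for some $\varepsilon \in [0,1]$. 4. $G$ satisfies Reiter's property for $\varepsilon = 1$.
   Context: $C_{00}(G,\mathbb{Q}_p)$ denotes compactly supported continuous functions $G\to\mathbb{Q}_p$, with sup norm $\|\cdot\|_\infty$ (using the $p$-adic norm) and action $(g\cdot f)(x)=f(g^{-1}x)$. For $\varepsilon\in(0,1]$, $G$ satisfies Reiter's property for $\varepsilon$ if for every compact subset $K\subset G$ there exists $f\in C_{00}(G,\mathbb{Q}_p)$ with $\|f\|_\infty=1$ and $\|g\cdot f-f\|_\infty<\varepsilon$ for all $g\in K$; for $\varepsilon=0$ it means that for every compact $K$ there exists such $f$ with $\|f\|_\infty=1$ and $g\cdot f=f$ for all $g\in K$. $G$ is locally elliptic if every finite subset of $G$ is contained in a compact subgroup. *)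

theory Defs
  imports "HOL-Analysis.Analysis" "HOL-Computational_Algebra.Primes"
begin

definition padic_val :: "nat \<Rightarrow> rat \<Rightarrow> int" where
  "padic_val p q = (case quotient_of q of (a, b) \<Rightarrow>
      int (multiplicity (int p) a) - int (multiplicity (int p) b))"

definition padic_abs :: "nat \<Rightarrow> rat \<Rightarrow> real" where
  "padic_abs p q = (if q = 0 then 0 else real p powi (- padic_val p q))"

text \<open>Elements of Q_p: Cauchy sequences of rationals for the p-adic absolute
  value (two sequences represent the same element iff their difference has
  p-adic norm 0).\<close>
definition qp_cauchy :: "nat \<Rightarrow> (nat \<Rightarrow> rat) \<Rightarrow> bool" where
  "qp_cauchy p X \<longleftrightarrow>
     (\<forall>e>0. \<exists>N. \<forall>m\<ge>N. \<forall>n\<ge>N. padic_abs p (X m - X n) < e)"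

text \<open>The p-adic norm on Q_p (the limit exists for Cauchy sequences).\<close>
definition qp_norm :: "nat \<Rightarrow> (nat \<Rightarrow> rat) \<Rightarrow> real" where
  "qp_norm p X = lim (\<lambda>n. padic_abs p (X n))"

definition C00 :: "nat \<Rightarrow> ('g::topological_space \<Rightarrow> nat \<Rightarrow> rat) set" where
  "C00 p = {f. (\<forall>x. qp_cauchy p (f x))
     \<and> (\<forall>x. \<forall>e>0. \<exists>U. open U \<and> x \<in> U \<and>
              (\<forall>y\<in>U. qp_norm p (\<lambda>n. f y n - f x n) < e))
     \<and> (\<exists>K. compact K \<and> (\<forall>x. x \<notin> K \<longrightarrow> qp_norm p (f x) = 0))}"

definition sup_norm :: "nat \<Rightarrow> ('g \<Rightarrow> nat \<Rightarrow> rat) \<Rightarrow> real" where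
  "sup_norm p f = (SUP x. qp_norm p (f x))"

text \<open>Left translation action (g\<cdot>f)(x) = f(g^{-1} x); the group is written additively
  (group_add is not assumed commutative).\<close>
definition translate :: "'g::group_add \<Rightarrow> ('g \<Rightarrow> 'b) \<Rightarrow> ('g \<Rightarrow> 'b)" where
  "translate g f = (\<lambda>x. f (- g + x))"

definition fun_diff :: "('g \<Rightarrow> nat \<Rightarrow> rat) \<Rightarrow> ('g \<Rightarrow> nat \<Rightarrow> rat) \<Rightarrow> ('g \<Rightarrow> nat \<Rightarrow> rat)" where
  "fun_diff f h = (\<lambda>x n. f x n - h x n)"

definition reiter :: "nat \<Rightarrow> real \<Rightarrow> 'g::topological_group_add itself \<Rightarrow> bool" where
  "reiter p \<epsilon> _ \<longleftrightarrow>
     (if \<epsilon> = 0 then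
        (\<forall>K::'g set. compact K \<longrightarrow> (\<exists>f\<in>C00 p. sup_norm p f = 1 \<and>
            (\<forall>g\<in>K. sup_norm p (fun_diff (translate g f) f) = 0)))
      else
        (\<forall>K::'g set. compact K \<longrightarrow> (\<exists>f\<in>C00 p. sup_norm p f = 1 \<and>
            (\<forall>g\<in>K. sup_norm p (fun_diff (translate g f) f) < \<epsilon>))))"

definition subgroup_add :: "'g::group_add set \<Rightarrow> bool" where
  "subgroup_add H \<longleftrightarrow> 0 \<in> H \<and> (\<forall>x\<in>H. \<forall>y\<in>H. x + y \<in> H) \<and> (\<forall>x\<in>H. - x \<in> H)"

definition locally_elliptic :: "'g::topological_group_add itself \<Rightarrow> bool" where
  "locally_elliptic _ \<longleftrightarrow>
     (\<forall>F::'g set. finite F \<longrightarrow> (\<exists>H. subgroup_add H \<and> compact H \<and> F \<subseteq> H))"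

definition totally_disconnected :: "'a::topological_space itself \<Rightarrow> bool" where
  "totally_disconnected _ \<longleftrightarrow> (\<forall>x::'a. connected_component_set UNIV x = {x})"

end

theory Submission
  imports Defs
begin


lemma padic_val_frac:
  fixes a b :: int
  assumes p: "prime p" and a: "a \<noteq> 0" and b: "b \<noteq> 0"
  shows "padic_val p (of_int a / of_int b) =
     int (multiplicity (int p) a) - int (multiplicity (int p) b)"
proof -
  obtain x y where q: "quotient_of (of_int a / of_int b) = (x, y)" by (cases "quotient_of (of_int a / of_int b)")
  have y: "y > 0" using quotient_of_denom_pos[OF q] .
  have eq: "(of_int a / of_int b :: rat) = of_int x / of_int y" using quotient_of_div[OF q] .
  have x: "x \<noteq> 0" using eq a b y by auto
  have "of_int (a * y) = (of_int (x * b) :: rat)" using eq b y by (simp add: field_simps)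
  hence ay: "a * y = x * b" by (metis of_int_eq_iff)
  have pe: "prime_elem (int p)" using p by simp
  have "multiplicity (int p) (a*y) = multiplicity (int p) (x*b)" using ay by simp
  hence "multiplicity (int p) a + multiplicity (int p) y = multiplicity (int p) x + multiplicity (int p) b"
    using prime_elem_multiplicity_mult_distrib[OF pe] a b x y by (metis less_irrefl)
  thus ?thesis unfolding padic_val_def q by simp
qed



lemma mult_sum_ge:
  fixes a b :: int
  assumes "prime p" "a + b \<noteq> 0"
  shows "multiplicity (int p) (a + b) \<ge> min (multiplicity (int p) a) (multiplicity (int p) b)"
proof -
  let ?m = "min (multiplicity (int p) a) (multiplicity (int p) b)"
  have "int p ^ ?m dvd a" by (rule multiplicity_dvd') simp
  moreover have "int p ^ ?m dvd b" by (rule multiplicity_dvd') simp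
  ultimately have "int p ^ ?m dvd a + b" by simp
  thus ?thesis using assms by (intro multiplicity_geI) (auto simp: prime_gt_1_nat)
qed

lemma padic_val_add:
  assumes p: "prime p" and a: "a \<noteq> 0" and b: "b \<noteq> 0" and ab: "a + b \<noteq> 0"
  shows "padic_val p (a + b) \<ge> min (padic_val p a) (padic_val p b)"
proof -
  obtain x y where q1: "quotient_of a = (x, y)" by (cases "quotient_of a")
  obtain z w where q2: "quotient_of b = (z, w)" by (cases "quotient_of b")
  have y: "y > 0" using quotient_of_denom_pos[OF q1] .
  have w: "w > 0" using quotient_of_denom_pos[OF q2] .
  have ea: "a = of_int x / of_int y" using quotient_of_div[OF q1] .
  have eb: "b = of_int z / of_int w" using quotient_of_div[OF q2] .
  have x: "x \<noteq> 0" using ea a by auto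
  have z: "z \<noteq> 0" using eb b by auto
  have es: "a + b = of_int (x*w + z*y) / of_int (y*w)" using ea eb y w by (simp add: field_simps)
  have s: "x*w + z*y \<noteq> 0" using es ab by (metis div_0 of_int_0)
  have pe: "prime_elem (int p)" using p by simp
  let ?v = "multiplicity (int p)"
  have va: "padic_val p a = int (?v x) - int (?v y)" using padic_val_frac[OF p x, of y] y ea by simp
  have vb: "padic_val p b = int (?v z) - int (?v w)" using padic_val_frac[OF p z, of w] w eb by simp
  have vs: "padic_val p (a+b) = int (?v (x*w + z*y)) - int (?v y) - int (?v w)"
    using padic_val_frac[OF p s, of "y*w"] y w es prime_elem_multiplicity_mult_distrib[OF pe, of y w] by simp
  have m1: "?v (x*w) = ?v x + ?v w" using prime_elem_multiplicity_mult_distrib[OF pe] x w by simp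
  have m2: "?v (z*y) = ?v z + ?v y" using prime_elem_multiplicity_mult_distrib[OF pe] z y by simp
  have "?v (x*w + z*y) \<ge> min (?v (x*w)) (?v (z*y))" by (rule mult_sum_ge[OF p s])
  thus ?thesis using va vb vs m1 m2 by linarith
qed

lemma padic_abs_nonneg: "padic_abs p q \<ge> 0"
  by (simp add: padic_abs_def)

lemma padic_abs_0 [simp]: "padic_abs p 0 = 0"
  by (simp add: padic_abs_def)

lemma padic_abs_1 [simp]: "padic_abs p 1 = 1"
  by (simp add: padic_abs_def padic_val_def quotient_of_number)

lemma padic_val_uminus: "padic_val p (- q) = padic_val p q"
proof -
  obtain x y where q1: "quotient_of q = (x, y)" by (cases "quotient_of q")
  have "quotient_of (-q) = (-x, y)" using q1 by (simp add: rat_uminus_code)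
  moreover have "multiplicity (int p) (- x) = multiplicity (int p) x"
    by (metis multiplicity_normalize_right normalize_int_def abs_minus_cancel)
  ultimately show ?thesis using q1 by (simp add: padic_val_def)
qed

lemma padic_abs_uminus [simp]: "padic_abs p (- q) = padic_abs p q"
  by (simp add: padic_abs_def padic_val_uminus)

lemma padic_abs_minus_commute: "padic_abs p (a - b) = padic_abs p (b - a)"
  by (metis minus_diff_eq padic_abs_uminus)

lemma padic_abs_add:
  assumes p: "prime p"
  shows "padic_abs p (a + b) \<le> max (padic_abs p a) (padic_abs p b)"
proof (cases "a = 0 \<or> b = 0 \<or> a + b = 0")
  case True
  have "0 \<le> max (padic_abs p a) (padic_abs p b)" by (meson le_max_iff_disj padic_abs_nonneg)
  moreover have "padic_abs p a \<le> max (padic_abs p a) (padic_abs p b)" by simp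
  moreover have "padic_abs p b \<le> max (padic_abs p a) (padic_abs p b)" by simp
  ultimately show ?thesis using True by (elim disjE) simp_all
next
  case False
  hence ne: "a \<noteq> 0" "b \<noteq> 0" "a + b \<noteq> 0" by auto
  have p1: "real p \<ge> 1" using prime_gt_1_nat[OF p] by simp
  have h: "padic_val p (a + b) \<ge> min (padic_val p a) (padic_val p b)" by (rule padic_val_add[OF p ne])
  show ?thesis
  proof (cases "padic_val p a \<le> padic_val p b")
    case True
    hence "real p powi (- padic_val p (a+b)) \<le> real p powi (- padic_val p a)"
      using h by (intro power_int_increasing p1) linarith
    thus ?thesis using ne by (simp add: padic_abs_def)
  next
    case False
    hence "real p powi (- padic_val p (a+b)) \<le> real p powi (- padic_val p b)"
      using h by (intro power_int_increasing p1) linarith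
    thus ?thesis using ne by (simp add: padic_abs_def)
  qed
qed

lemma padic_abs_eq:
  assumes p: "prime p" and lt: "padic_abs p (a - b) < padic_abs p b"
  shows "padic_abs p a = padic_abs p b"
proof -
  have "padic_abs p a \<le> max (padic_abs p (a - b)) (padic_abs p b)"
    using padic_abs_add[OF p, of "a - b" b] by simp
  hence 1: "padic_abs p a \<le> padic_abs p b" using lt by simp
  have "padic_abs p b \<le> max (padic_abs p (b - a)) (padic_abs p a)"
    using padic_abs_add[OF p, of "b - a" a] by simp
  hence "padic_abs p b \<le> padic_abs p a" using lt by (simp add: padic_abs_minus_commute)
  thus ?thesis using 1 by simp
qed

lemma padic_abs_values: "padic_abs p q = 0 \<or> (\<exists>k. padic_abs p q = real p powi k)"
  by (auto simp: padic_abs_def)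



lemma qp_norm_const [simp]: "qp_norm p (\<lambda>n. c) = padic_abs p c"
  unfolding qp_norm_def by (rule limI) simp

lemma qp_cauchy_const [simp]: "qp_cauchy p (\<lambda>n. c)"
  unfolding qp_cauchy_def by simp

lemma qp_cauchy_props:
  assumes p: "prime p" and X: "qp_cauchy p X"
  shows "(\<lambda>n. padic_abs p (X n)) \<longlonglongrightarrow> qp_norm p X"
    and "qp_norm p X = 0 \<or> (\<exists>k. qp_norm p X = real p powi k)"
proof -
  have "\<exists>c. (\<lambda>n. padic_abs p (X n)) \<longlonglongrightarrow> c \<and> (c = 0 \<or> (\<exists>k. c = real p powi k))"
  proof (cases "\<forall>e>0. \<exists>N. \<forall>n\<ge>N. padic_abs p (X n) < e")
    case True
    have "(\<lambda>n. padic_abs p (X n)) \<longlonglongrightarrow> 0"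
    proof (rule LIMSEQ_I)
      fix r :: real assume "0 < r"
      then obtain N where "\<forall>n\<ge>N. padic_abs p (X n) < r" using True by blast
      thus "\<exists>no. \<forall>n\<ge>no. norm (padic_abs p (X n) - 0) < r"
        using padic_abs_nonneg by auto
    qed
    thus ?thesis by blast
  next
    case False
    then obtain e where e: "e > 0" and fr: "\<And>N. \<exists>n\<ge>N. padic_abs p (X n) \<ge> e"
      by (meson not_le)
    obtain N where N: "\<And>m n. m \<ge> N \<Longrightarrow> n \<ge> N \<Longrightarrow> padic_abs p (X m - X n) < e"
      using X e unfolding qp_cauchy_def by blast
    obtain n where n: "n \<ge> N" "padic_abs p (X n) \<ge> e" using fr by blast
    have "\<forall>m\<ge>N. padic_abs p (X m) = padic_abs p (X n)"
    proof (intro allI impI)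
      fix m assume "m \<ge> N"
      hence "padic_abs p (X m - X n) < padic_abs p (X n)" using N[of m n] n by auto
      thus "padic_abs p (X m) = padic_abs p (X n)" by (rule padic_abs_eq[OF p])
    qed
    hence "(\<lambda>m. padic_abs p (X m)) \<longlonglongrightarrow> padic_abs p (X n)"
      by (intro tendsto_eventually) (auto simp: eventually_sequentially)
    thus ?thesis using padic_abs_values by blast
  qed
  then obtain c where c: "(\<lambda>n. padic_abs p (X n)) \<longlonglongrightarrow> c" "c = 0 \<or> (\<exists>k. c = real p powi k)" by blast
  have "qp_norm p X = c" unfolding qp_norm_def using c(1) by (rule limI)
  thus "(\<lambda>n. padic_abs p (X n)) \<longlonglongrightarrow> qp_norm p X" "qp_norm p X = 0 \<or> (\<exists>k. qp_norm p X = real p powi k)"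
    using c by auto
qed

lemma qp_norm_nonneg:
  assumes p: "prime p" and X: "qp_cauchy p X"
  shows "qp_norm p X \<ge> 0"
  using qp_cauchy_props(1)[OF p X] by (rule LIMSEQ_le_const) (simp add: padic_abs_nonneg)

lemma padic_abs_diff:
  assumes p: "prime p"
  shows "padic_abs p (a - b) \<le> max (padic_abs p a) (padic_abs p b)"
  using padic_abs_add[OF p, of a "- b"] by simp

lemma qp_cauchy_add:
  assumes p: "prime p" and X: "qp_cauchy p X" and Y: "qp_cauchy p Y"
  shows "qp_cauchy p (\<lambda>n. X n + Y n)"
  unfolding qp_cauchy_def
proof (intro allI impI)
  fix e :: real assume e: "e > 0"
  obtain N1 where N1: "\<forall>m\<ge>N1. \<forall>n\<ge>N1. padic_abs p (X m - X n) < e" using X e unfolding qp_cauchy_def by blast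
  obtain N2 where N2: "\<forall>m\<ge>N2. \<forall>n\<ge>N2. padic_abs p (Y m - Y n) < e" using Y e unfolding qp_cauchy_def by blast
  have "\<forall>m\<ge>max N1 N2. \<forall>n\<ge>max N1 N2. padic_abs p ((X m + Y m) - (X n + Y n)) < e"
  proof (intro allI impI)
    fix m n assume "m \<ge> max N1 N2" "n \<ge> max N1 N2"
    hence a: "padic_abs p (X m - X n) < e" "padic_abs p (Y m - Y n) < e" using N1 N2 by auto
    have "(X m + Y m) - (X n + Y n) = (X m - X n) + (Y m - Y n)" by simp
    hence "padic_abs p ((X m + Y m) - (X n + Y n)) \<le> max (padic_abs p (X m - X n)) (padic_abs p (Y m - Y n))"
      using padic_abs_add[OF p] by metis
    thus "padic_abs p ((X m + Y m) - (X n + Y n)) < e" using a by simp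
  qed
  thus "\<exists>N. \<forall>m\<ge>N. \<forall>n\<ge>N. padic_abs p ((X m + Y m) - (X n + Y n)) < e" by blast
qed

lemma qp_cauchy_uminus:
  assumes X: "qp_cauchy p X"
  shows "qp_cauchy p (\<lambda>n. - X n)"
  using X unfolding qp_cauchy_def
  by (metis minus_diff_eq minus_diff_minus padic_abs_uminus)

lemma qp_cauchy_diff:
  assumes p: "prime p" and X: "qp_cauchy p X" and Y: "qp_cauchy p Y"
  shows "qp_cauchy p (\<lambda>n. X n - Y n)"
  using qp_cauchy_add[OF p X qp_cauchy_uminus[OF Y]] by simp

lemma qp_norm_add:
  assumes p: "prime p" and X: "qp_cauchy p X" and Y: "qp_cauchy p Y"
  shows "qp_norm p (\<lambda>n. X n + Y n) \<le> max (qp_norm p X) (qp_norm p Y)"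
proof (rule LIMSEQ_le)
  show "(\<lambda>n. padic_abs p (X n + Y n)) \<longlonglongrightarrow> qp_norm p (\<lambda>n. X n + Y n)"
    using qp_cauchy_props(1)[OF p qp_cauchy_add[OF p X Y]] .
  show "(\<lambda>n. max (padic_abs p (X n)) (padic_abs p (Y n))) \<longlonglongrightarrow> max (qp_norm p X) (qp_norm p Y)"
    by (intro tendsto_max qp_cauchy_props(1)[OF p X] qp_cauchy_props(1)[OF p Y])
  show "\<exists>N. \<forall>n\<ge>N. padic_abs p (X n + Y n) \<le> max (padic_abs p (X n)) (padic_abs p (Y n))"
    using padic_abs_add[OF p] by blast
qed

lemma qp_norm_diff:
  assumes p: "prime p" and X: "qp_cauchy p X" and Y: "qp_cauchy p Y"
  shows "qp_norm p (\<lambda>n. X n - Y n) \<le> max (qp_norm p X) (qp_norm p Y)"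
proof -
  have "qp_norm p (\<lambda>n. - Y n) = qp_norm p Y" unfolding qp_norm_def by simp
  thus ?thesis using qp_norm_add[OF p X qp_cauchy_uminus[OF Y]] by simp
qed

lemma qp_norm_commute:
  "qp_norm p (\<lambda>n. X n - Y n) = qp_norm p (\<lambda>n. Y n - X n)"
  unfolding qp_norm_def by (simp add: padic_abs_minus_commute)

lemma qp_norm_tri:
  assumes p: "prime p" and X: "qp_cauchy p X" and Y: "qp_cauchy p Y"
  shows "qp_norm p X \<le> max (qp_norm p (\<lambda>n. X n - Y n)) (qp_norm p Y)"
  using qp_norm_add[OF p qp_cauchy_diff[OF p X Y] Y] by simp

lemma qp_norm_eq:
  assumes p: "prime p" and X: "qp_cauchy p X" and Y: "qp_cauchy p Y"
    and lt: "qp_norm p (\<lambda>n. X n - Y n) < qp_norm p Y"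
  shows "qp_norm p X = qp_norm p Y"
proof -
  have 1: "qp_norm p X \<le> qp_norm p Y" using qp_norm_tri[OF p X Y] lt by simp
  have "qp_norm p Y \<le> max (qp_norm p (\<lambda>n. Y n - X n)) (qp_norm p X)" using qp_norm_tri[OF p Y X] .
  hence "qp_norm p Y \<le> qp_norm p X" using lt qp_norm_commute[of p X Y] by simp
  thus ?thesis using 1 by simp
qed



lemma C00_bound:
  assumes p: "prime p" and f: "f \<in> C00 p"
  shows "\<exists>B. \<forall>x. qp_norm p (f x) \<le> B"
proof -
  have cau: "\<And>x. qp_cauchy p (f x)" using f by (simp add: C00_def)
  have cont: "\<And>x. \<exists>U. open U \<and> x \<in> U \<and> (\<forall>y\<in>U. qp_norm p (\<lambda>n. f y n - f x n) < 1)"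
    using f by (simp add: C00_def)
  obtain S where S: "compact S" "\<And>x. x \<notin> S \<Longrightarrow> qp_norm p (f x) = 0"
    using f by (auto simp: C00_def)
  define U where "U x = (SOME U. open U \<and> x \<in> U \<and> (\<forall>y\<in>U. qp_norm p (\<lambda>n. f y n - f x n) < 1))" for x
  have U: "open (U x)" "x \<in> U x" "\<And>y. y \<in> U x \<Longrightarrow> qp_norm p (\<lambda>n. f y n - f x n) < 1" for x
    using someI_ex[OF cont[of x]] unfolding U_def by blast+
  obtain S' where S': "S' \<subseteq> S" "finite S'" "S \<subseteq> (\<Union>c\<in>S'. U c)"
    using compactE_image[OF S(1), of S U] U(1,2) by blast
  define B where "B = Max (insert 1 ((\<lambda>x. qp_norm p (f x)) ` S'))"
  have B1: "1 \<le> B" and B2: "\<And>x. x \<in> S' \<Longrightarrow> qp_norm p (f x) \<le> B"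
    unfolding B_def using S'(2) by auto
  have "qp_norm p (f y) \<le> B" for y
  proof (cases "y \<in> S")
    case False thus ?thesis using S(2) B1 by simp
  next
    case True
    then obtain c where c: "c \<in> S'" "y \<in> U c" using S'(3) by blast
    have "qp_norm p (f y) \<le> max (qp_norm p (\<lambda>n. f y n - f c n)) (qp_norm p (f c))"
      by (rule qp_norm_tri[OF p cau cau])
    also have "\<dots> \<le> B" using U(3)[OF c(2)] B1 B2[OF c(1)] by simp
    finally show ?thesis .
  qed
  thus ?thesis by blast
qed

lemma powi_le1:
  assumes p: "prime p" and "real p powi k \<le> 1" "real p powi k \<noteq> 1"
  shows "real p powi k \<le> 1 / real p"
proof -
  have p1: "real p \<ge> 1" using prime_gt_1_nat[OF p] by simp
  have "k \<le> -1"
  proof (rule ccontr)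
    assume "\<not> k \<le> -1"
    hence "0 \<le> k" by simp
    hence "real p powi 0 \<le> real p powi k" by (intro power_int_increasing p1)
    thus False using assms by simp
  qed
  hence "real p powi k \<le> real p powi (-1)" by (intro power_int_increasing p1)
  thus ?thesis by (simp add: power_int_minus divide_inverse)
qed

lemma reiter1_imp_le:
  assumes p: "prime p" and R: "reiter p 1 TYPE('g::{topological_group_add,t2_space})"
  shows "locally_elliptic TYPE('g)"
  unfolding locally_elliptic_def
proof (intro allI impI)
  fix F :: "'g set" assume "finite F"
  hence "compact F" by (rule finite_imp_compact)
  then obtain f where f: "f \<in> C00 p" and sf: "sup_norm p f = 1"
     and df: "\<And>g. g \<in> F \<Longrightarrow> sup_norm p (fun_diff (translate g f) f) < 1"
    using R unfolding reiter_def by auto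
  have cau: "\<And>x. qp_cauchy p (f x)" using f by (simp add: C00_def)
  have cont: "\<And>x. \<exists>U. open U \<and> x \<in> U \<and> (\<forall>y\<in>U. qp_norm p (\<lambda>n. f y n - f x n) < 1)"
    using f by (simp add: C00_def)
  obtain S where S: "compact S" "\<And>x. x \<notin> S \<Longrightarrow> qp_norm p (f x) = 0"
    using f by (auto simp: C00_def)
  obtain B where B: "\<And>x. qp_norm p (f x) \<le> B" using C00_bound[OF p f] by blast
  define N where "N x = qp_norm p (f x)" for x
  have bdd: "bdd_above (range N)" unfolding N_def using B by (intro bdd_aboveI2) 
  have N1: "N x \<le> 1" for x
    using cSUP_upper[OF UNIV_I bdd] sf unfolding sup_norm_def N_def by simp
  have D: "qp_norm p (\<lambda>n. f (-g + x) n - f x n) < 1" if g: "g \<in> F" for g x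
  proof -
    have "qp_norm p (\<lambda>n. f (-g + y) n - f y n) \<le> max B B" for y
      using qp_norm_diff[OF p cau cau, of "-g + y" y] B[of "-g+y"] B[of y] by simp
    hence "bdd_above (range (\<lambda>y. qp_norm p (\<lambda>n. f (-g + y) n - f y n)))"
      by (intro bdd_aboveI2) simp
    from cSUP_upper[OF UNIV_I this, of x] df[OF g]
    show ?thesis unfolding sup_norm_def fun_diff_def translate_def by simp
  qed
  obtain a where a: "N a = 1"
  proof (rule ccontr)
    assume "\<not> thesis"
    with that have ne: "N x \<noteq> 1" for x by blast
    have "N x \<le> 1 / real p" for x
    proof -
      have "N x = 0 \<or> (\<exists>k. N x = real p powi k)" unfolding N_def by (rule qp_cauchy_props(2)[OF p cau])
      thus ?thesis
      proof
        assume "N x = 0" thus ?thesis by simp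
      next
        assume "\<exists>k. N x = real p powi k"
        then obtain k where "N x = real p powi k" by blast
        thus ?thesis using powi_le1[OF p, of k] N1[of x] ne[of x] by simp
      qed
    qed
    hence "(SUP x. N x) \<le> 1 / real p" by (intro cSUP_least) auto
    moreover have "1 / real p < 1" using prime_gt_1_nat[OF p] by simp
    ultimately show False using sf unfolding sup_norm_def N_def by simp
  qed
  define A where "A = {x. N x = 1}"
  have "open A"
  proof (rule open_subopen[THEN iffD2], intro ballI)
    fix x assume "x \<in> A"
    hence x: "N x = 1" by (simp add: A_def)
    obtain U where U: "open U" "x \<in> U" "\<forall>y\<in>U. qp_norm p (\<lambda>n. f y n - f x n) < 1" using cont by blast
    have "U \<subseteq> A"
    proof
      fix y assume "y \<in> U"
      hence "qp_norm p (\<lambda>n. f y n - f x n) < qp_norm p (f x)" using U(3) x by (simp add: N_def)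
      hence "N y = N x" unfolding N_def by (rule qp_norm_eq[OF p cau cau])
      thus "y \<in> A" using x by (simp add: A_def)
    qed
    thus "\<exists>T. open T \<and> x \<in> T \<and> T \<subseteq> A" using U by blast
  qed
  have "open (- A)"
  proof (rule open_subopen[THEN iffD2], intro ballI)
    fix x assume "x \<in> - A"
    hence x: "N x < 1" using N1[of x] by (simp add: A_def)
    obtain U where U: "open U" "x \<in> U" "\<forall>y\<in>U. qp_norm p (\<lambda>n. f y n - f x n) < 1" using cont by blast
    have "U \<subseteq> - A"
    proof
      fix y assume "y \<in> U"
      have "N y \<le> max (qp_norm p (\<lambda>n. f y n - f x n)) (N x)" unfolding N_def by (rule qp_norm_tri[OF p cau cau])
      moreover have "qp_norm p (\<lambda>n. f y n - f x n) < 1" using U(3) \<open>y \<in> U\<close> by blast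
      ultimately have "N y < 1" using x by linarith
      thus "y \<in> - A" by (simp add: A_def)
    qed
    thus "\<exists>T. open T \<and> x \<in> T \<and> T \<subseteq> - A" using U by blast
  qed
  hence "closed A" by (simp add: closed_def)
  have "A \<subseteq> S" using S(2) unfolding A_def N_def by force
  hence "compact A" using compact_Int_closed[OF S(1) \<open>closed A\<close>] by (simp add: Int_absorb1)
  have FA: "(-g + x \<in> A) = (x \<in> A)" if g: "g \<in> F" for g x
  proof
    assume "-g + x \<in> A"
    hence "qp_norm p (\<lambda>n. f x n - f (-g + x) n) < qp_norm p (f (-g + x))"
      using D[OF g, of x] qp_norm_commute[of p "f (-g + x)" "f x"] by (simp add: A_def N_def)
    hence "N x = N (-g + x)" unfolding N_def by (rule qp_norm_eq[OF p cau cau])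
    thus "x \<in> A" using \<open>-g + x \<in> A\<close> by (simp add: A_def)
  next
    assume "x \<in> A"
    hence "qp_norm p (\<lambda>n. f (-g + x) n - f x n) < qp_norm p (f x)"
      using D[OF g, of x] by (simp add: A_def N_def)
    hence "N (-g + x) = N x" unfolding N_def by (rule qp_norm_eq[OF p cau cau])
    thus "-g + x \<in> A" using \<open>x \<in> A\<close> by (simp add: A_def)
  qed
  define H where "H = {g. \<forall>x. (-g + x \<in> A) = (x \<in> A)}"
  have "subgroup_add H" unfolding subgroup_add_def H_def
  proof (intro conjI ballI)
    show "0 \<in> {g. \<forall>x. (- g + x \<in> A) = (x \<in> A)}" by simp
  next
    fix g h assume g: "g \<in> {g. \<forall>x. (- g + x \<in> A) = (x \<in> A)}" and h: "h \<in> {g. \<forall>x. (- g + x \<in> A) = (x \<in> A)}"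
    show "g + h \<in> {g. \<forall>x. (- g + x \<in> A) = (x \<in> A)}"
    unfolding mem_Collect_eq proof (intro allI)
      fix x
      have "- (g + h) + x = -h + (-g + x)" by (metis minus_add add.assoc)
      thus "(- (g + h) + x \<in> A) = (x \<in> A)" using g h by simp
    qed
  next
    fix g assume g: "g \<in> {g. \<forall>x. (- g + x \<in> A) = (x \<in> A)}"
    show "- g \<in> {g. \<forall>x. (- g + x \<in> A) = (x \<in> A)}"
    unfolding mem_Collect_eq proof (intro allI)
      fix x
      have "(- g + (g + x) \<in> A) = (g + x \<in> A)" using g by blast
      thus "(- (- g) + x \<in> A) = (x \<in> A)" by (simp add: add.assoc[symmetric])
    qed
  qed
  moreover have "F \<subseteq> H" using FA by (auto simp: H_def)
  moreover have "compact H"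
  proof -
    have "a \<in> A" using a by (simp add: A_def)
    have sub: "H \<subseteq> (\<lambda>y. y + - a) ` A"
    proof
      fix g assume "g \<in> H"
      hence "(-g + (g + a) \<in> A) = (g + a \<in> A)" unfolding H_def by blast
      hence "g + a \<in> A" using \<open>a \<in> A\<close> by (simp add: add.assoc[symmetric])
      moreover have "g = (g + a) + - a" by (simp add: add.assoc)
      ultimately show "g \<in> (\<lambda>y. y + - a) ` A" by blast
    qed
    have cim: "compact ((\<lambda>y. y + - a) ` A)"
      by (intro compact_continuous_image \<open>compact A\<close> continuous_intros)
    have "closed H"
    proof -
      have eq: "H = (\<Inter>x. {g. (-g + x \<in> A) = (x \<in> A)})" by (auto simp: H_def)
      have "closed {g. (-g + x \<in> A) = (x \<in> A)}" for x
      proof (cases "x \<in> A")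
        case True
        hence "{g. (-g + x \<in> A) = (x \<in> A)} = (\<lambda>g. -g + x) -` A" by auto
        thus ?thesis using continuous_closed_vimage[OF \<open>closed A\<close>, of "\<lambda>g. -g + x"]
          by (simp add: continuous_intros)
      next
        case False
        hence "{g. (-g + x \<in> A) = (x \<in> A)} = (\<lambda>g. -g + x) -` (- A)" by auto
        thus ?thesis using continuous_closed_vimage[OF closed_Compl[OF \<open>open A\<close>], of "\<lambda>g. -g + x"]
          by (simp add: continuous_intros)
      qed
      thus ?thesis unfolding eq by (intro closed_INT) auto
    qed
    have "compact ((\<lambda>y. y + - a) ` A \<inter> H)" by (rule compact_Int_closed[OF cim \<open>closed H\<close>])
    thus ?thesis using sub by (metis Int_absorb1 inf_commute)
  qed
  ultimately show "\<exists>H. subgroup_add H \<and> compact H \<and> F \<subseteq> H" by blast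
qed



lemma open_subgroup_add:
  fixes W B :: "'g::{topological_group_add,t2_space} set"
  assumes W: "subgroup_add W" and B: "open B" "0 \<in> B" "B \<subseteq> W"
  shows "open W" "closed W"
proof -
  have cont: "\<And>c y. continuous (at y) (\<lambda>y::'g. -c + y)" by (intro continuous_intros)
  have add: "\<And>x y. x \<in> W \<Longrightarrow> y \<in> W \<Longrightarrow> x + y \<in> W" and neg: "\<And>x. x \<in> W \<Longrightarrow> -x \<in> W"
    using W by (auto simp: subgroup_add_def)
  show "open W"
  proof (rule open_subopen[THEN iffD2], intro ballI)
    fix w assume w: "w \<in> W"
    let ?T = "(\<lambda>y. -w + y) -` B"
    have "open ?T" by (rule continuous_open_vimage[OF B(1) cont])
    moreover have "w \<in> ?T" using B(2) by simp
    moreover have "?T \<subseteq> W"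
    proof
      fix y assume "y \<in> ?T"
      hence "-w + y \<in> W" using B(3) by auto
      hence "w + (-w + y) \<in> W" using add w by blast
      thus "y \<in> W" by (simp add: add.assoc[symmetric])
    qed
    ultimately show "\<exists>T. open T \<and> w \<in> T \<and> T \<subseteq> W" by blast
  qed
  have "open (- W)"
  proof (rule open_subopen[THEN iffD2], intro ballI)
    fix x assume x: "x \<in> - W"
    let ?T = "(\<lambda>y. -x + y) -` B"
    have "open ?T" by (rule continuous_open_vimage[OF B(1) cont])
    moreover have "x \<in> ?T" using B(2) by simp
    moreover have "?T \<subseteq> - W"
    proof
      fix y assume y: "y \<in> ?T"
      show "y \<in> - W"
      proof
        assume "y \<in> W"
        have "-x + y \<in> W" using y B(3) by auto
        hence "y + - (-x + y) \<in> W" using add neg \<open>y \<in> W\<close> by blast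
        hence "x \<in> W" by (simp add: minus_add add.assoc[symmetric])
        thus False using x by simp
      qed
    qed
    ultimately show "\<exists>T. open T \<and> x \<in> T \<and> T \<subseteq> - W" by blast
  qed
  thus "closed W" by (simp add: closed_def)
qed

lemma Hausdorff_euclidean_t2: "Hausdorff_space (euclidean :: 'a::t2_space topology)"
  unfolding Hausdorff_space_def
  by (metis disjnt_def hausdorff open_openin)

lemma compact_open_nbhd:
  assumes td: "totally_disconnected TYPE('g::{topological_group_add, t2_space})"
    and lc: "locally_compact_space (euclidean :: 'g topology)"
  shows "\<exists>V::'g set. compact V \<and> open V \<and> 0 \<in> V"
proof -
  obtain U K where UK: "openin euclidean U" "compactin euclidean K" "(0::'g) \<in> U" "U \<subseteq> K"
  proof -
    have "\<forall>x\<in>topspace (euclidean::'g topology). \<exists>U K. openin euclidean U \<and> compactin euclidean K \<and> x \<in> U \<and> U \<subseteq> K"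
      using lc unfolding locally_compact_space_def .
    hence "\<exists>U K. openin euclidean U \<and> compactin euclidean K \<and> (0::'g) \<in> U \<and> U \<subseteq> K"
      unfolding topspace_euclidean by blast
    thus thesis using that by blast
  qed
  have cc: "connected_component_of_set euclidean (0::'g) = {0}"
  proof -
    have "connected_component_of euclidean (0::'g) = connected_component UNIV 0"
      by (auto simp: connected_component_of_def connected_component_def fun_eq_iff)
    thus ?thesis using td unfolding totally_disconnected_def by simp
  qed
  have "{0::'g} \<in> connected_components_of euclidean"
    unfolding connected_components_of_def using cc by (metis UNIV_I image_eqI topspace_euclidean)
  moreover have "compactin euclidean {0::'g}" by simp
  ultimately obtain U' V' where UV: "openin euclidean U'" "openin euclidean V'" "disjnt U' V'"
     "U' \<union> V' = topspace euclidean" "{0} \<subseteq> U'" "U' \<subseteq> U"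
    using wilder_locally_compact_component_thm[OF lc Hausdorff_euclidean_t2 _ _ UK(1)] UK(3) by blast
  have "- U' = V'" using UV(3,4) by (auto simp: disjnt_def)
  hence "closed U'" using UV(2) by (metis closed_def open_openin)
  have "U' \<subseteq> K" using UV(6) UK(4) by blast
  have "compact K" using UK(2) by simp
  have "compact (K \<inter> U')" using compact_Int_closed[OF \<open>compact K\<close> \<open>closed U'\<close>] .
  moreover have "K \<inter> U' = U'" using \<open>U' \<subseteq> K\<close> by blast
  ultimately have "compact U'" by simp
  moreover have "open U'" using UV(1) by (metis open_openin)
  ultimately show ?thesis using UV(5) by blast
qed

lemma van_dantzig:
  assumes td: "totally_disconnected TYPE('g::{topological_group_add, t2_space})"
    and lc: "locally_compact_space (euclidean :: 'g topology)"
  shows "\<exists>W::'g set. subgroup_add W \<and> open W \<and> compact W"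
proof -
  obtain V :: "'g set" where V: "compact V" "open V" "0 \<in> V" using compact_open_nbhd[OF td lc] by blast
  let ?O = "(\<lambda>z::'g \<times> 'g. snd z + fst z) -` V"
  have "open ?O" by (rule continuous_open_vimage[OF V(2)]) (intro continuous_intros)
  moreover have "{0} \<times> V \<subseteq> ?O" by auto
  ultimately obtain X0 where X0: "0 \<in> X0" "open X0" "X0 \<times> V \<subseteq> ?O"
    using Elementary_Topology.tube_lemma[OF V(1)] by blast
  have X0V: "\<And>b v. b \<in> X0 \<Longrightarrow> v \<in> V \<Longrightarrow> v + b \<in> V" using X0(3) by auto
  define W where "W = {x. \<forall>v\<in>V. v + x \<in> V \<and> v + - x \<in> V}"
  have sg: "subgroup_add W" unfolding subgroup_add_def
  proof (intro conjI ballI)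
    show "0 \<in> W" by (simp add: W_def)
  next
    fix x y assume x: "x \<in> W" and y: "y \<in> W"
    show "x + y \<in> W" unfolding W_def mem_Collect_eq
    proof
      fix v assume v: "v \<in> V"
      have "v + (x + y) = (v + x) + y" by (simp add: add.assoc)
      moreover have "v + - (x + y) = (v + - y) + - x" by (metis minus_add add.assoc)
      ultimately show "v + (x + y) \<in> V \<and> v + - (x + y) \<in> V" using x y v unfolding W_def by auto
    qed
  next
    fix x assume x: "x \<in> W"
    thus "- x \<in> W" unfolding W_def by auto
  qed
  define B where "B = X0 \<inter> uminus -` X0"
  have "open B" unfolding B_def
    by (intro open_Int X0(2) continuous_open_vimage[OF X0(2)]) (intro continuous_intros)
  moreover have "0 \<in> B" using X0(1) by (simp add: B_def)
  moreover have "B \<subseteq> W"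
  proof
    fix x assume "x \<in> B"
    hence "x \<in> X0" "- x \<in> X0" by (auto simp: B_def)
    thus "x \<in> W" unfolding W_def using X0V by blast
  qed
  ultimately have oc: "open W" "closed W" using open_subgroup_add[OF sg] by blast+
  have "W \<subseteq> V" using V(3) by (auto simp: W_def)
  hence "compact W" using compact_Int_closed[OF V(1) oc(2)] by (simp add: Int_absorb1)
  thus ?thesis using sg oc by blast
qed



lemma compact_in_open_subgroup:
  fixes K W :: "'g::{topological_group_add, t2_space} set"
  assumes le: "locally_elliptic TYPE('g)"
    and W: "subgroup_add W" "open W" "compact W"
    and K: "compact K"
  shows "\<exists>R. subgroup_add R \<and> open R \<and> closed R \<and> compact R \<and> K \<subseteq> R"
proof -
  have cont: "\<And>c y. continuous (at y) (\<lambda>y::'g. -c + y)" by (intro continuous_intros)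
  have W0: "0 \<in> W" and Wadd: "\<And>x y. x \<in> W \<Longrightarrow> y \<in> W \<Longrightarrow> x + y \<in> W"
    and Wneg: "\<And>x. x \<in> W \<Longrightarrow> -x \<in> W"
    using W(1) by (auto simp: subgroup_add_def)
  have opn: "open ((\<lambda>y. -k + y) -` W)" for k by (rule continuous_open_vimage[OF W(2)]) (intro continuous_intros)
  obtain F where F: "F \<subseteq> K" "finite F" "K \<subseteq> (\<Union>k\<in>F. (\<lambda>y. -k + y) -` W)"
    using compactE_image[OF K, of K "\<lambda>k. (\<lambda>y. -k + y) -` W"] opn W0 by force
  define S where "S = F \<union> uminus ` F"
  have "finite S" using F(2) by (simp add: S_def)
  have Ssym: "\<And>s. s \<in> S \<Longrightarrow> -s \<in> S" by (auto simp: S_def)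
  define C where "C = (\<lambda>z. fst z + fst (snd z) + snd (snd z)) ` (W \<times> (S \<times> W))"
  have "compact C" unfolding C_def
    by (intro compact_continuous_image compact_Times W(3) finite_imp_compact[OF \<open>finite S\<close>] continuous_intros)
  obtain T where T: "T \<subseteq> C" "finite T" "C \<subseteq> (\<Union>t\<in>T. (\<lambda>y. -t + y) -` W)"
    using compactE_image[OF \<open>compact C\<close>, of C "\<lambda>t. (\<lambda>y. -t + y) -` W"] opn W0 by force
  obtain H where H: "subgroup_add H" "compact H" "T \<subseteq> H"
    using le T(2) unfolding locally_elliptic_def by blast
  have Hadd: "\<And>x y. x \<in> H \<Longrightarrow> y \<in> H \<Longrightarrow> x + y \<in> H" and H0: "0 \<in> H"
    using H(1) by (auto simp: subgroup_add_def)
  define M where "M = (\<lambda>z. fst z + snd z) ` (H \<times> W)"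
  have "compact M" unfolding M_def
    by (intro compact_continuous_image compact_Times W(3) H(2) continuous_intros)
  have memM: "\<And>h w. h \<in> H \<Longrightarrow> w \<in> W \<Longrightarrow> h + w \<in> M" unfolding M_def by force
  have Mmem: "\<And>m. m \<in> M \<Longrightarrow> \<exists>h\<in>H. \<exists>w\<in>W. m = h + w" unfolding M_def by force
  define Q where "Q = {x. \<forall>m\<in>M. m + x \<in> M}"
  define R where "R = {x. x \<in> Q \<and> -x \<in> Q}"
  have Qadd: "x + y \<in> Q" if "x \<in> Q" "y \<in> Q" for x y
    using that unfolding Q_def by (simp add: add.assoc[symmetric])
  have WQ: "W \<subseteq> Q"
  proof
    fix w' assume w': "w' \<in> W"
    show "w' \<in> Q" unfolding Q_def mem_Collect_eq
    proof (intro ballI)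
      fix m assume "m \<in> M"
      then obtain h w where hw: "h \<in> H" "w \<in> W" "m = h + w" using Mmem by blast
      have "m + w' = h + (w + w')" using hw by (simp add: add.assoc)
      thus "m + w' \<in> M" using memM hw Wadd w' by simp
    qed
  qed
  have SQ: "S \<subseteq> Q"
  proof
    fix s assume s: "s \<in> S"
    show "s \<in> Q" unfolding Q_def mem_Collect_eq
    proof (intro ballI)
      fix m assume "m \<in> M"
      then obtain h w where hw: "h \<in> H" "w \<in> W" "m = h + w" using Mmem by blast
      have "w + s + 0 \<in> C" unfolding C_def using hw(2) s W0
        by (intro image_eqI[where x="(w, s, 0)"]) auto
      then obtain t where t: "t \<in> T" "-t + (w + s + 0) \<in> W" using T(3) by blast
      define w' where "w' = -t + (w + s)"
      have w'W: "w' \<in> W" using t(2) by (simp add: w'_def)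
      have "w + s = t + w'" by (simp add: w'_def add.assoc[symmetric])
      hence "m + s = (h + t) + w'" using hw by (simp add: add.assoc)
      moreover have "h + t \<in> H" using Hadd hw(1) t(1) T H(3) by blast
      ultimately show "m + s \<in> M" using memM w'W by simp
    qed
  qed
  have sg: "subgroup_add R" unfolding subgroup_add_def
  proof (intro conjI ballI)
    show "0 \<in> R" by (simp add: R_def Q_def)
  next
    fix x y assume "x \<in> R" "y \<in> R"
    hence "x + y \<in> Q" "-y + -x \<in> Q" unfolding R_def using Qadd by blast+
    thus "x + y \<in> R" unfolding R_def by (simp only: mem_Collect_eq minus_add)
  next
    fix x assume "x \<in> R" thus "-x \<in> R" by (simp add: R_def)
  qed
  have WR: "W \<subseteq> R" using WQ Wneg by (auto simp: R_def)
  have SR: "S \<subseteq> R" using SQ Ssym by (auto simp: R_def)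
  have "K \<subseteq> R"
  proof
    fix x assume "x \<in> K"
    then obtain k where k: "k \<in> F" "-k + x \<in> W" using F(3) by blast
    have "k \<in> R" using SR k(1) by (auto simp: S_def)
    moreover have "-k + x \<in> R" using WR k(2) by blast
    ultimately have "k + (-k + x) \<in> R" using sg unfolding subgroup_add_def by blast
    thus "x \<in> R" by (simp add: add.assoc[symmetric])
  qed
  have oc: "open R" "closed R" using open_subgroup_add[OF sg W(2) W0 WR] by blast+
  have "R \<subseteq> M"
  proof
    fix x assume "x \<in> R"
    hence "x \<in> Q" by (simp add: R_def)
    moreover have "0 \<in> M" using memM[OF H0 W0] by simp
    ultimately have "0 + x \<in> M" unfolding Q_def by blast
    thus "x \<in> M" by simp
  qed
  have "compact (M \<inter> R)" by (rule compact_Int_closed[OF \<open>compact M\<close> oc(2)])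
  moreover have "M \<inter> R = R" using \<open>R \<subseteq> M\<close> by blast
  ultimately have "compact R" by simp
  thus ?thesis using sg oc \<open>K \<subseteq> R\<close> by blast
qed



lemma le_imp_reiter0:
  assumes p: "prime p"
    and td: "totally_disconnected TYPE('g::{topological_group_add, t2_space})"
    and lc: "locally_compact_space (euclidean :: 'g topology)"
    and le: "locally_elliptic TYPE('g)"
  shows "reiter p 0 TYPE('g)"
  unfolding reiter_def simp_thms(6) if_True
proof (intro allI impI)
  fix K :: "'g set" assume K: "compact K"
  obtain W :: "'g set" where W: "subgroup_add W" "open W" "compact W" using van_dantzig[OF td lc] by blast
  obtain R where R: "subgroup_add R" "open R" "closed R" "compact R" "K \<subseteq> R"
    using compact_in_open_subgroup[OF le W K] by blast
  have R0: "0 \<in> R" and Radd: "\<And>x y. x \<in> R \<Longrightarrow> y \<in> R \<Longrightarrow> x + y \<in> R"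
    and Rneg: "\<And>x. x \<in> R \<Longrightarrow> -x \<in> R"
    using R(1) by (auto simp: subgroup_add_def)
  define f where "f = (\<lambda>(x::'g) (n::nat). if x \<in> R then (1::rat) else 0)"
  have nf: "qp_norm p (f x) = (if x \<in> R then 1 else 0)" for x
    by (simp add: f_def)
  have "f \<in> C00 p" unfolding C00_def mem_Collect_eq
  proof (intro conjI allI impI)
    fix x show "qp_cauchy p (f x)" by (simp add: f_def)
  next
    fix x :: 'g and e :: real assume e: "e > 0"
    show "\<exists>U. open U \<and> x \<in> U \<and> (\<forall>y\<in>U. qp_norm p (\<lambda>n. f y n - f x n) < e)"
    proof (cases "x \<in> R")
      case True
      have "\<forall>y\<in>R. qp_norm p (\<lambda>n. f y n - f x n) < e" using True e by (simp add: f_def)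
      thus ?thesis using R(2) True by blast
    next
      case False
      have "\<forall>y\<in>-R. qp_norm p (\<lambda>n. f y n - f x n) < e" using False e by (simp add: f_def)
      moreover have "open (- R)" using R(3) by (simp add: open_Compl)
      ultimately show ?thesis using False by blast
    qed
  next
    show "\<exists>K. compact K \<and> (\<forall>x. x \<notin> K \<longrightarrow> qp_norm p (f x) = 0)"
      using R(4) nf by auto
  qed
  moreover have "sup_norm p f = 1"
  proof -
    have "(SUP x. qp_norm p (f x)) \<le> 1" by (intro cSUP_least) (auto simp: nf)
    moreover have "qp_norm p (f 0) \<le> (SUP x. qp_norm p (f x))"
      by (intro cSUP_upper) (auto simp: nf intro!: bdd_aboveI2[where M=1])
    ultimately show ?thesis unfolding sup_norm_def using R0 nf[of 0] by simp
  qed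
  moreover have "sup_norm p (fun_diff (translate g f) f) = 0" if g: "g \<in> K" for g
  proof -
    have gR: "g \<in> R" using g R(5) by blast
    have "(-g + x \<in> R) = (x \<in> R)" for x
    proof
      assume "-g + x \<in> R"
      hence "g + (-g + x) \<in> R" using Radd gR by blast
      thus "x \<in> R" by (simp add: add.assoc[symmetric])
    next
      assume "x \<in> R" thus "-g + x \<in> R" using Radd Rneg gR by blast
    qed
    hence "fun_diff (translate g f) f = (\<lambda>x n. 0)"
      by (simp add: fun_diff_def translate_def f_def fun_eq_iff)
    thus ?thesis by (simp add: sup_norm_def)
  qed
  ultimately show "\<exists>f\<in>C00 p. sup_norm p f = 1 \<and> (\<forall>g\<in>K. sup_norm p (fun_diff (translate g f) f) = 0)"
    by blast
qed

theorem theorem4p7: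
  fixes p :: nat
  assumes "prime p"
    and "totally_disconnected TYPE('g::{topological_group_add, t2_space})"
    and "locally_compact_space (euclidean :: 'g topology)"
  shows "(locally_elliptic TYPE('g) \<longleftrightarrow> reiter p 0 TYPE('g))
       \<and> (reiter p 0 TYPE('g) \<longleftrightarrow> (\<exists>\<epsilon>\<in>{0..1}. reiter p \<epsilon> TYPE('g)))
       \<and> ((\<exists>\<epsilon>\<in>{0..1}. reiter p \<epsilon> TYPE('g)) \<longleftrightarrow> reiter p 1 TYPE('g))"
proof -
  have a: "locally_elliptic TYPE('g) \<Longrightarrow> reiter p 0 TYPE('g)"
    by (rule le_imp_reiter0[OF assms])
  have b: "reiter p 1 TYPE('g) \<Longrightarrow> locally_elliptic TYPE('g)"
    by (rule reiter1_imp_le[OF assms(1)])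
  have c: "reiter p 1 TYPE('g)" if "\<epsilon> \<in> {0..1}" "reiter p \<epsilon> TYPE('g)" for \<epsilon>
  proof -
    have "\<forall>K::'g set. compact K \<longrightarrow> (\<exists>f\<in>C00 p. sup_norm p f = 1 \<and>
            (\<forall>g\<in>K. sup_norm p (fun_diff (translate g f) f) < 1))"
    proof (cases "\<epsilon> = 0")
      case True
      hence "\<forall>K::'g set. compact K \<longrightarrow> (\<exists>f\<in>C00 p. sup_norm p f = 1 \<and>
            (\<forall>g\<in>K. sup_norm p (fun_diff (translate g f) f) = 0))"
        using that(2) unfolding reiter_def by simp
      thus ?thesis by fastforce
    next
      case False
      hence "\<forall>K::'g set. compact K \<longrightarrow> (\<exists>f\<in>C00 p. sup_norm p f = 1 \<and>
            (\<forall>g\<in>K. sup_norm p (fun_diff (translate g f) f) < \<epsilon>))"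
        using that(2) unfolding reiter_def by simp
      moreover have "\<epsilon> \<le> 1" using that(1) by simp
      ultimately show ?thesis by (meson less_le_trans)
    qed
    thus ?thesis unfolding reiter_def by simp
  qed
  have d: "reiter p 0 TYPE('g) \<Longrightarrow> \<exists>\<epsilon>\<in>{0..1}. reiter p \<epsilon> TYPE('g)"
    by (rule bexI[where x=0]) auto
  show ?thesis using a b c d by blast
qed

end
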